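(* Let $X,Y,Z$ be countable discrete metric spaces of bounded geometry, $d_{XY},d'_{XY}\in D(X,Y)$, $d_{YZ},d'_{YZ}\in D(Y,Z)$, with $M_{d_{XY}}(X,Y)=M_{d'_{XY}}(X,Y)$ and $M_{d_{YZ}}(Y,Z)=M_{d'_{YZ}}(Y,Z)$. Then $M_{d_{YZ}\circ d_{XY}}(X,Z)=M_{d'_{YZ}\circ d'_{XY}}(X,Z)$.
   Context: Bounded geometry: for every $R>0$ the number of points in balls of radius $R$ is finite and uniformly bounded. $D(X,Y)$ is the set of metrics on $X\sqcup Y$ restricting to $d_X,d_Y$. For $T:H_X=l^2(X)\to H_Y=l^2(Y)$ bounded, $T_{yx}=\langle T\delta_x,\delta_y\rangle$; $T$ has propagation less than $L$ w.r.t. $d$ if $T_{yx}=0$ whenever $d(x,y)\ge L$; $M_d(X,Y)$ is the norm closure of bounded finite-propagation operators. $(d_{YZ}\circ d_{XY})$ is the metric on $X\sqcup Z$ extending $d_X,d_Z$ with $(d_{YZ}\circ d_{XY})(x,z)=\inf_{y\in Y}(d_{XY}(x,y)+d_{YZ}(y,z))$. *)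

theory Defs
  imports "HOL-Analysis.Analysis"
begin

definition bounded_geometry :: "('a \<Rightarrow> 'a \<Rightarrow> real) \<Rightarrow> bool" where
  "bounded_geometry d \<longleftrightarrow>
     (\<forall>R>0. \<exists>N::nat. \<forall>x. finite {y. d x y < R} \<and> card {y. d x y < R} \<le> N)"

definition D_metrics ::
  "('x \<Rightarrow> 'x \<Rightarrow> real) \<Rightarrow> ('y \<Rightarrow> 'y \<Rightarrow> real) \<Rightarrow> (('x + 'y) \<Rightarrow> ('x + 'y) \<Rightarrow> real) set" where
  "D_metrics dX dY = {d. Metric_space UNIV d \<and>
      (\<forall>a b. d (Inl a) (Inl b) = dX a b) \<and> (\<forall>a b. d (Inr a) (Inr b) = dY a b)}"

text \<open>A bounded operator l2(X) -> l2(Y) is represented by its matrix T y x = <T delta_x, delta_y>.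
  The matrix defines a bounded operator with norm at most C iff the associated sesquilinear
  form is bounded by C on finitely supported vectors.\<close>
definition mat_bound :: "('y \<Rightarrow> 'x \<Rightarrow> complex) \<Rightarrow> real \<Rightarrow> bool" where
  "mat_bound T C \<longleftrightarrow>
     (\<forall>(A::'x set) (B::'y set) v w. finite A \<and> finite B \<longrightarrow>
        cmod (\<Sum>y\<in>B. \<Sum>x\<in>A. cnj (w y) * T y x * v x)
          \<le> C * sqrt (\<Sum>x\<in>A. (cmod (v x))\<^sup>2) * sqrt (\<Sum>y\<in>B. (cmod (w y))\<^sup>2))"

definition bounded_op :: "('y \<Rightarrow> 'x \<Rightarrow> complex) \<Rightarrow> bool" where
  "bounded_op T \<longleftrightarrow> (\<exists>C. mat_bound T C)"

definition op_norm :: "('y \<Rightarrow> 'x \<Rightarrow> complex) \<Rightarrow> real" where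
  "op_norm T = Inf {C. C \<ge> 0 \<and> mat_bound T C}"

definition prop_less ::
  "(('x + 'y) \<Rightarrow> ('x + 'y) \<Rightarrow> real) \<Rightarrow> real \<Rightarrow> ('y \<Rightarrow> 'x \<Rightarrow> complex) \<Rightarrow> bool" where
  "prop_less d L T \<longleftrightarrow> (\<forall>x y. d (Inl x) (Inr y) \<ge> L \<longrightarrow> T y x = 0)"

definition finite_prop ::
  "(('x + 'y) \<Rightarrow> ('x + 'y) \<Rightarrow> real) \<Rightarrow> ('y \<Rightarrow> 'x \<Rightarrow> complex) \<Rightarrow> bool" where
  "finite_prop d T \<longleftrightarrow> (\<exists>L. prop_less d L T)"

definition M_d :: "(('x + 'y) \<Rightarrow> ('x + 'y) \<Rightarrow> real) \<Rightarrow> ('y \<Rightarrow> 'x \<Rightarrow> complex) set" where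
  "M_d d = {T. bounded_op T \<and>
      (\<forall>e>0. \<exists>S. bounded_op S \<and> finite_prop d S \<and> op_norm (\<lambda>y x. T y x - S y x) < e)}"

definition compose_metric ::
  "(('y + 'z) \<Rightarrow> ('y + 'z) \<Rightarrow> real) \<Rightarrow> (('x + 'y) \<Rightarrow> ('x + 'y) \<Rightarrow> real)
     \<Rightarrow> ('x + 'z) \<Rightarrow> ('x + 'z) \<Rightarrow> real" where
  "compose_metric dYZ dXY p q =
     (case (p, q) of
        (Inl x, Inl x') \<Rightarrow> dXY (Inl x) (Inl x')
      | (Inr z, Inr z') \<Rightarrow> dYZ (Inr z) (Inr z')
      | (Inl x, Inr z) \<Rightarrow> (INF y. dXY (Inl x) (Inr y) + dYZ (Inl y) (Inr z))
      | (Inr z, Inl x) \<Rightarrow> (INF y. dXY (Inl x) (Inr y) + dYZ (Inl y) (Inr z)))"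

end

theory Submission
  imports Defs
begin


lemma mat_bound_mono:
  fixes T :: "'y \<Rightarrow> 'x \<Rightarrow> complex"
  assumes h: "mat_bound T C" and CC: "C \<le> C'" shows "mat_bound T C'"
  unfolding mat_bound_def
proof (intro allI impI)
  fix A :: "'x set" and B :: "'y set" and v w
  assume fin: "finite A \<and> finite B"
  have 1: "cmod (\<Sum>y\<in>B. \<Sum>x\<in>A. cnj (w y) * T y x * v x)
          \<le> C * sqrt (\<Sum>x\<in>A. (cmod (v x))\<^sup>2) * sqrt (\<Sum>y\<in>B. (cmod (w y))\<^sup>2)"
    using h fin unfolding mat_bound_def by blast
  have s: "0 \<le> sqrt (\<Sum>x\<in>A. (cmod (v x))\<^sup>2) * sqrt (\<Sum>y\<in>B. (cmod (w y))\<^sup>2)"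
    by (intro mult_nonneg_nonneg real_sqrt_ge_zero sum_nonneg) auto
  have "C * (sqrt (\<Sum>x\<in>A. (cmod (v x))\<^sup>2) * sqrt (\<Sum>y\<in>B. (cmod (w y))\<^sup>2))
      \<le> C' * (sqrt (\<Sum>x\<in>A. (cmod (v x))\<^sup>2) * sqrt (\<Sum>y\<in>B. (cmod (w y))\<^sup>2))"
    by (rule mult_right_mono[OF CC s])
  with 1 show "cmod (\<Sum>y\<in>B. \<Sum>x\<in>A. cnj (w y) * T y x * v x)
          \<le> C' * sqrt (\<Sum>x\<in>A. (cmod (v x))\<^sup>2) * sqrt (\<Sum>y\<in>B. (cmod (w y))\<^sup>2)"
    by (simp only: mult.assoc)
qed

lemma entry_le_op_norm:
  assumes "bounded_op U" shows "cmod (U y x) \<le> op_norm U"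
proof -
  obtain C where C: "mat_bound U C" using assms bounded_op_def by blast
  have "mat_bound U (max C 0)" by (rule mat_bound_mono[OF C]) simp
  hence "max C 0 \<in> {C. C \<ge> 0 \<and> mat_bound U C}" by simp
  hence ne: "{C. C \<ge> 0 \<and> mat_bound U C} \<noteq> {}" by blast
  have "cmod (U y x) \<le> C'" if "C' \<ge> 0 \<and> mat_bound U C'" for C'
  proof -
    have mb: "mat_bound U C'" using that by blast
    show ?thesis
      using mb[unfolded mat_bound_def, rule_format, of "{x}" "{y}" "\<lambda>_. 1" "\<lambda>_. 1"] by simp
  qed
  hence "\<And>C'. C' \<in> {C. C \<ge> 0 \<and> mat_bound U C} \<Longrightarrow> cmod (U y x) \<le> C'" by blast
  thus ?thesis unfolding op_norm_def by (rule cInf_greatest[OF ne])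
qed

lemma op_norm_zero: "op_norm (\<lambda>(y::'y) (x::'x). 0::complex) = 0"
proof -
  have "{C. C \<ge> 0 \<and> mat_bound (\<lambda>(y::'y) (x::'x). 0::complex) C} = {0..}"
    by (auto simp: mat_bound_def intro!: mult_nonneg_nonneg sum_nonneg)
  thus ?thesis unfolding op_norm_def by simp
qed

lemma bounded_op_diff:
  assumes "bounded_op T" "bounded_op S" shows "bounded_op (\<lambda>y x. T y x - S y x)"
proof -
  obtain C1 C2 where C1: "mat_bound T C1" and C2: "mat_bound S C2" using assms bounded_op_def by blast
  have "mat_bound (\<lambda>y x. T y x - S y x) (C1 + C2)"
    unfolding mat_bound_def
  proof (intro allI impI)
    fix A :: "'b set" and B :: "'a set" and v w
    assume fin: "finite A \<and> finite B"
    let ?a = "\<Sum>y\<in>B. \<Sum>x\<in>A. cnj (w y) * T y x * v x"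
    let ?b = "\<Sum>y\<in>B. \<Sum>x\<in>A. cnj (w y) * S y x * v x"
    let ?s = "sqrt (\<Sum>x\<in>A. (cmod (v x))\<^sup>2) * sqrt (\<Sum>y\<in>B. (cmod (w y))\<^sup>2)"
    have eq: "(\<Sum>y\<in>B. \<Sum>x\<in>A. cnj (w y) * (T y x - S y x) * v x) = ?a - ?b"
      by (simp add: right_diff_distrib left_diff_distrib sum_subtractf)
    have 1: "cmod ?a \<le> C1 * ?s"
      using C1 fin unfolding mat_bound_def mult.assoc by blast
    have 2: "cmod ?b \<le> C2 * ?s"
      using C2 fin unfolding mat_bound_def mult.assoc by blast
    have 3: "cmod (?a - ?b) \<le> cmod ?a + cmod ?b" by (rule norm_triangle_ineq4)
    have 4: "(C1 + C2) * ?s = C1 * ?s + C2 * ?s" by (rule distrib_right)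
    from 1 2 3 4 have "cmod (?a - ?b) \<le> (C1 + C2) * ?s" by linarith
    thus "cmod (\<Sum>y\<in>B. \<Sum>x\<in>A. cnj (w y) * (T y x - S y x) * v x)
          \<le> (C1 + C2) * sqrt (\<Sum>x\<in>A. (cmod (v x))\<^sup>2) * sqrt (\<Sum>y\<in>B. (cmod (w y))\<^sup>2)"
      unfolding eq by (simp only: mult.assoc)
  qed
  thus ?thesis unfolding bounded_op_def by blast
qed



lemma sum_if_card:
  fixes c :: real
  assumes "finite A" "finite {x. P x}" "card {x. P x} \<le> N" "c \<ge> 0"
  shows "(\<Sum>x\<in>A. if P x then c else 0) \<le> c * real N"
proof -
  have "(\<Sum>x\<in>A. if P x then c else 0) = (\<Sum>x\<in>{x\<in>A. P x}. c)"
    by (rule sum.inter_filter[OF assms(1), symmetric])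
  also have "\<dots> = c * real (card {x\<in>A. P x})" by simp
  also have "card {x\<in>A. P x} \<le> N"
  proof -
    have "{x\<in>A. P x} \<subseteq> {x. P x}" by blast
    from card_mono[OF assms(2) this] show ?thesis using assms(3) by linarith
  qed
  hence "c * real (card {x\<in>A. P x}) \<le> c * real N" using assms(4) by (simp add: mult_left_mono)
  finally show ?thesis .
qed

lemma schur:
  fixes P :: "'x \<Rightarrow> 'y \<Rightarrow> bool"
  assumes r: "\<And>x. finite {y. P x y} \<and> card {y. P x y} \<le> N1"
    and c: "\<And>y. finite {x. P x y} \<and> card {x. P x y} \<le> N2"
  shows "mat_bound (\<lambda>y x. if P x y then 1 else (0::complex)) (sqrt (real N1 * real N2))"
  unfolding mat_bound_def
proof (intro allI impI)
  fix A :: "'x set" and B :: "'y set" and v w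
  assume fin: "finite A \<and> finite B"
  define a where "a = (\<lambda>(x,y). if P x y then cmod (w y) else 0)"
  define b where "b = (\<lambda>(x,y). if P x y then cmod (v x) else 0)"
  let ?V = "\<Sum>x\<in>A. (cmod (v x))\<^sup>2" and ?W = "\<Sum>y\<in>B. (cmod (w y))\<^sup>2"
  have "cmod (\<Sum>y\<in>B. \<Sum>x\<in>A. cnj (w y) * (if P x y then 1 else 0) * v x)
      \<le> (\<Sum>y\<in>B. cmod (\<Sum>x\<in>A. cnj (w y) * (if P x y then 1 else 0) * v x))"
    by (rule norm_sum)
  also have "\<dots> \<le> (\<Sum>y\<in>B. \<Sum>x\<in>A. cmod (cnj (w y) * (if P x y then 1 else 0) * v x))"
    by (intro sum_mono norm_sum)
  also have "\<dots> = (\<Sum>x\<in>A. \<Sum>y\<in>B. \<bar>a (x,y)\<bar> * \<bar>b (x,y)\<bar>)"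
    by (subst sum.swap) (auto simp: a_def b_def norm_mult intro!: sum.cong)
  also have "\<dots> = (\<Sum>p\<in>A\<times>B. \<bar>a p\<bar> * \<bar>b p\<bar>)"
    by (simp add: sum.cartesian_product)
  also have "\<dots> \<le> L2_set a (A\<times>B) * L2_set b (A\<times>B)"
    by (rule L2_set_mult_ineq)
  finally have h1: "cmod (\<Sum>y\<in>B. \<Sum>x\<in>A. cnj (w y) * (if P x y then 1 else 0) * v x)
      \<le> L2_set a (A\<times>B) * L2_set b (A\<times>B)" .
  have h2: "L2_set a (A\<times>B) \<le> sqrt (real N2 * ?W)"
  proof -
    have "(\<Sum>p\<in>A\<times>B. (a p)\<^sup>2) = (\<Sum>p\<in>A\<times>B. (\<lambda>(x,y). if P x y then (cmod (w y))\<^sup>2 else 0) p)"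
      by (rule sum.cong) (auto simp: a_def)
    also have "\<dots> = (\<Sum>x\<in>A. \<Sum>y\<in>B. if P x y then (cmod (w y))\<^sup>2 else 0)"
      by (simp add: sum.cartesian_product)
    also have "\<dots> = (\<Sum>y\<in>B. \<Sum>x\<in>A. if P x y then (cmod (w y))\<^sup>2 else 0)"
      by (rule sum.swap)
    also have "\<dots> \<le> (\<Sum>y\<in>B. (cmod (w y))\<^sup>2 * real N2)"
      using fin c by (intro sum_mono sum_if_card) auto
    finally have h: "(\<Sum>p\<in>A\<times>B. (a p)\<^sup>2) \<le> (\<Sum>y\<in>B. (cmod (w y))\<^sup>2) * real N2"
      by (simp add: sum_distrib_right)
    show ?thesis unfolding L2_set_def using h by (intro real_sqrt_le_mono) (simp add: mult.commute)
  qed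
  have h3: "L2_set b (A\<times>B) \<le> sqrt (real N1 * ?V)"
  proof -
    have "(\<Sum>p\<in>A\<times>B. (b p)\<^sup>2) = (\<Sum>p\<in>A\<times>B. (\<lambda>(x,y). if P x y then (cmod (v x))\<^sup>2 else 0) p)"
      by (rule sum.cong) (auto simp: b_def)
    also have "\<dots> = (\<Sum>x\<in>A. \<Sum>y\<in>B. if P x y then (cmod (v x))\<^sup>2 else 0)"
      by (simp add: sum.cartesian_product)
    also have "\<dots> \<le> (\<Sum>x\<in>A. (cmod (v x))\<^sup>2 * real N1)"
      using fin r by (intro sum_mono sum_if_card) auto
    finally have h: "(\<Sum>p\<in>A\<times>B. (b p)\<^sup>2) \<le> (\<Sum>x\<in>A. (cmod (v x))\<^sup>2) * real N1"
      by (simp add: sum_distrib_right)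
    show ?thesis unfolding L2_set_def using h by (intro real_sqrt_le_mono) (simp add: mult.commute)
  qed
  have "L2_set a (A\<times>B) * L2_set b (A\<times>B) \<le> sqrt (real N2 * ?W) * sqrt (real N1 * ?V)"
    using h2 h3 by (intro mult_mono) (auto simp: L2_set_nonneg intro!: mult_nonneg_nonneg sum_nonneg)
  also have "sqrt (real N2 * ?W) * sqrt (real N1 * ?V) = sqrt (real N1 * real N2) * sqrt ?V * sqrt ?W"
    by (simp add: real_sqrt_mult)
  finally show "cmod (\<Sum>y\<in>B. \<Sum>x\<in>A. cnj (w y) * (if P x y then 1 else 0) * v x)
      \<le> sqrt (real N1 * real N2) * sqrt ?V * sqrt ?W"
    using h1 by linarith
qed



definition ctrl :: "(('x + 'y) \<Rightarrow> ('x + 'y) \<Rightarrow> real) \<Rightarrow> (('x + 'y) \<Rightarrow> ('x + 'y) \<Rightarrow> real) \<Rightarrow> bool" where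
  "ctrl d d' \<longleftrightarrow> (\<forall>R. \<exists>R'. \<forall>x y. d (Inl x) (Inr y) < R \<longrightarrow> d' (Inl x) (Inr y) < R')"

lemma ctrl_M: assumes "ctrl d d'" shows "M_d d \<subseteq> M_d d'"
proof
  fix T assume T: "T \<in> M_d d"
  show "T \<in> M_d d'" unfolding M_d_def
  proof (intro CollectI conjI allI impI)
    show "bounded_op T" using T M_d_def by blast
    fix e :: real assume "e > 0"
    then obtain S where S: "bounded_op S" "finite_prop d S" "op_norm (\<lambda>y x. T y x - S y x) < e"
      using T unfolding M_d_def by blast
    then obtain L where L: "prop_less d L S" unfolding finite_prop_def by blast
    obtain R' where R': "\<forall>x y. d (Inl x) (Inr y) < L \<longrightarrow> d' (Inl x) (Inr y) < R'"
      using assms unfolding ctrl_def by blast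
    have "prop_less d' R' S" unfolding prop_less_def
    proof (intro allI impI)
      fix x y assume "R' \<le> d' (Inl x) (Inr y)"
      hence "L \<le> d (Inl x) (Inr y)" using R' by (meson not_le)
      thus "S y x = 0" using L unfolding prop_less_def by blast
    qed
    thus "\<exists>S. bounded_op S \<and> finite_prop d' S \<and> op_norm (\<lambda>y x. T y x - S y x) < e"
      using S finite_prop_def by blast
  qed
qed

lemma M_ctrl:
  fixes d d' :: "('x + 'y) \<Rightarrow> ('x + 'y) \<Rightarrow> real"
  assumes D: "d \<in> D_metrics dX dY" and bX: "bounded_geometry dX" and bY: "bounded_geometry dY"
    and sub: "M_d d \<subseteq> M_d d'"
  shows "ctrl d d'"
  unfolding ctrl_def
proof
  fix R :: real
  interpret m: Metric_space UNIV d using D D_metrics_def by blast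
  have dX: "\<And>a b. d (Inl a) (Inl b) = dX a b" and dY: "\<And>a b. d (Inr a) (Inr b) = dY a b"
    using D unfolding D_metrics_def by auto
  show "\<exists>R'. \<forall>x y. d (Inl x) (Inr y) < R \<longrightarrow> d' (Inl x) (Inr y) < R'"
  proof (cases "R > 0")
    case False
    thus ?thesis using m.nonneg by (meson le_less_trans not_less)
  next
    case True
    hence "2*R > 0" by simp
    then obtain N1 where N1: "\<And>y. finite {y'. dY y y' < 2*R} \<and> card {y'. dY y y' < 2*R} \<le> N1"
      using bY unfolding bounded_geometry_def by blast
    obtain N2 where N2: "\<And>x. finite {x'. dX x x' < 2*R} \<and> card {x'. dX x x' < 2*R} \<le> N2"
      using bX \<open>2*R > 0\<close> unfolding bounded_geometry_def by blast
    define P where "P = (\<lambda>x y. d (Inl x) (Inr y) < R)"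
    have row: "finite {y. P x y} \<and> card {y. P x y} \<le> N1" for x
    proof (cases "{y. P x y} = {}")
      case True thus ?thesis by simp
    next
      case False
      then obtain y0 where y0: "P x y0" by blast
      have "{y. P x y} \<subseteq> {y'. dY y0 y' < 2*R}"
      proof
        fix y assume "y \<in> {y. P x y}"
        hence "P x y" by simp
        have "d (Inr y0) (Inr y) \<le> d (Inr y0) (Inl x) + d (Inl x) (Inr y)" by (rule m.triangle) auto
        also have "\<dots> = d (Inl x) (Inr y0) + d (Inl x) (Inr y)" using m.commute by simp
        finally show "y \<in> {y'. dY y0 y' < 2*R}" using y0 \<open>P x y\<close> dY P_def by simp
      qed
      thus ?thesis using N1[of y0] by (meson card_mono finite_subset order_trans)
    qed
    have col: "finite {x. P x y} \<and> card {x. P x y} \<le> N2" for y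
    proof (cases "{x. P x y} = {}")
      case True thus ?thesis by simp
    next
      case False
      then obtain x0 where x0: "P x0 y" by blast
      have "{x. P x y} \<subseteq> {x'. dX x0 x' < 2*R}"
      proof
        fix x assume "x \<in> {x. P x y}"
        hence "P x y" by simp
        have "d (Inl x0) (Inl x) \<le> d (Inl x0) (Inr y) + d (Inr y) (Inl x)" by (rule m.triangle) auto
        also have "\<dots> = d (Inl x0) (Inr y) + d (Inl x) (Inr y)" using m.commute by simp
        finally show "x \<in> {x'. dX x0 x' < 2*R}" using x0 \<open>P x y\<close> dX P_def by simp
      qed
      thus ?thesis using N2[of x0] by (meson card_mono finite_subset order_trans)
    qed
    define T where "T = (\<lambda>y x. if P x y then 1 else (0::complex))"
    have bT: "bounded_op T" unfolding T_def bounded_op_def using schur[OF row col] by blast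
    have pT: "prop_less d R T" unfolding prop_less_def T_def P_def by auto
    have z: "op_norm (\<lambda>y x. T y x - T y x) = 0" using op_norm_zero by simp
    have fT: "finite_prop d T" using pT finite_prop_def by blast
    have "T \<in> M_d d" unfolding M_d_def using bT fT z by (auto intro!: exI[of _ T])
    hence "T \<in> M_d d'" using sub by blast
    hence "\<exists>S. bounded_op S \<and> finite_prop d' S \<and> op_norm (\<lambda>y x. T y x - S y x) < 1"
      unfolding M_d_def by simp
    then obtain S where S: "bounded_op S" "finite_prop d' S" "op_norm (\<lambda>y x. T y x - S y x) < 1"
      by blast
    then obtain L where L: "prop_less d' L S" unfolding finite_prop_def by blast
    have "d' (Inl x) (Inr y) < L" if "d (Inl x) (Inr y) < R" for x y
    proof (rule ccontr)
      assume "\<not> d' (Inl x) (Inr y) < L"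
      hence "S y x = 0" using L unfolding prop_less_def by (simp add: not_less)
      moreover have "cmod (T y x - S y x) \<le> op_norm (\<lambda>y x. T y x - S y x)"
        using entry_le_op_norm[OF bounded_op_diff[OF bT S(1)]] by simp
      ultimately show False using S(3) that by (simp add: T_def P_def)
    qed
    thus ?thesis by blast
  qed
qed

lemma compose_ctrl:
  assumes m1: "Metric_space UNIV dXY" and m2: "Metric_space UNIV dYZ"
    and m1': "Metric_space UNIV dXY'" and m2': "Metric_space UNIV dYZ'"
    and c1: "ctrl dXY dXY'" and c2: "ctrl dYZ dYZ'"
  shows "ctrl (compose_metric dYZ dXY) (compose_metric dYZ' dXY')"
  unfolding ctrl_def
proof
  fix R
  obtain R1 where R1: "\<forall>x y. dXY (Inl x) (Inr y) < R \<longrightarrow> dXY' (Inl x) (Inr y) < R1"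
    using c1 ctrl_def by blast
  obtain R2 where R2: "\<forall>x y. dYZ (Inl x) (Inr y) < R \<longrightarrow> dYZ' (Inl x) (Inr y) < R2"
    using c2 ctrl_def by blast
  have n1: "\<And>a b. dXY a b \<ge> 0" by (rule Metric_space.nonneg[OF m1])
  have n2: "\<And>a b. dYZ a b \<ge> 0" by (rule Metric_space.nonneg[OF m2])
  have n1': "\<And>a b. dXY' a b \<ge> 0" by (rule Metric_space.nonneg[OF m1'])
  have n2': "\<And>a b. dYZ' a b \<ge> 0" by (rule Metric_space.nonneg[OF m2'])
  have "compose_metric dYZ' dXY' (Inl x) (Inr z) < R1 + R2"
    if "compose_metric dYZ dXY (Inl x) (Inr z) < R" for x z
  proof -
    have bb: "bdd_below (range (\<lambda>y. dXY (Inl x) (Inr y) + dYZ (Inl y) (Inr z)))"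
      by (rule bdd_belowI[of _ 0]) (auto intro: add_nonneg_nonneg n1 n2)
    have bb': "bdd_below (range (\<lambda>y. dXY' (Inl x) (Inr y) + dYZ' (Inl y) (Inr z)))"
      by (rule bdd_belowI[of _ 0]) (auto intro: add_nonneg_nonneg n1' n2')
    from that have "(INF y. dXY (Inl x) (Inr y) + dYZ (Inl y) (Inr z)) < R"
      by (simp add: compose_metric_def)
    then obtain y where y: "dXY (Inl x) (Inr y) + dYZ (Inl y) (Inr z) < R"
      using cINF_less_iff[OF _ bb] by auto
    hence "dXY (Inl x) (Inr y) < R" "dYZ (Inl y) (Inr z) < R"
      using n1[of "Inl x" "Inr y"] n2[of "Inl y" "Inr z"] by linarith+
    hence "dXY' (Inl x) (Inr y) + dYZ' (Inl y) (Inr z) < R1 + R2" using R1 R2 by (simp add: add_strict_mono)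
    moreover have "(INF y. dXY' (Inl x) (Inr y) + dYZ' (Inl y) (Inr z)) \<le> dXY' (Inl x) (Inr y) + dYZ' (Inl y) (Inr z)"
      by (rule cINF_lower[OF bb']) simp
    ultimately show ?thesis by (simp add: compose_metric_def)
  qed
  thus "\<exists>R'. \<forall>x z. compose_metric dYZ dXY (Inl x) (Inr z) < R \<longrightarrow> compose_metric dYZ' dXY' (Inl x) (Inr z) < R'"
    by blast
qed

theorem mainTheorem8:
  fixes dX :: "'x::countable \<Rightarrow> 'x \<Rightarrow> real"
    and dY :: "'y::countable \<Rightarrow> 'y \<Rightarrow> real"
    and dZ :: "'z::countable \<Rightarrow> 'z \<Rightarrow> real"
    and dXY dXY' :: "('x + 'y) \<Rightarrow> ('x + 'y) \<Rightarrow> real"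
    and dYZ dYZ' :: "('y + 'z) \<Rightarrow> ('y + 'z) \<Rightarrow> real"
  assumes "Metric_space UNIV dX" and "bounded_geometry dX"
    and "Metric_space UNIV dY" and "bounded_geometry dY"
    and "Metric_space UNIV dZ" and "bounded_geometry dZ"
    and "dXY \<in> D_metrics dX dY" and "dXY' \<in> D_metrics dX dY"
    and "dYZ \<in> D_metrics dY dZ" and "dYZ' \<in> D_metrics dY dZ"
    and "M_d dXY = M_d dXY'"
    and "M_d dYZ = M_d dYZ'"
  shows "M_d (compose_metric dYZ dXY) = M_d (compose_metric dYZ' dXY')"
proof -
  have ms: "Metric_space UNIV dXY" "Metric_space UNIV dXY'" "Metric_space UNIV dYZ" "Metric_space UNIV dYZ'"
    using assms(7-10) D_metrics_def by auto
  have "ctrl dXY dXY'" "ctrl dXY' dXY"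
    using M_ctrl[OF assms(7) assms(2) assms(4)] M_ctrl[OF assms(8) assms(2) assms(4)] assms(11) by auto
  moreover have "ctrl dYZ dYZ'" "ctrl dYZ' dYZ"
    using M_ctrl[OF assms(9) assms(4) assms(6)] M_ctrl[OF assms(10) assms(4) assms(6)] assms(12) by auto
  ultimately have "ctrl (compose_metric dYZ dXY) (compose_metric dYZ' dXY')"
     "ctrl (compose_metric dYZ' dXY') (compose_metric dYZ dXY)"
    using compose_ctrl ms by blast+
  thus ?thesis using ctrl_M by blast
qed

end
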